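(* Assume $z>w>x>y$, $w+x>z+y$, $w>0$, $z>0$, that $G$ is connected, that $\boldsymbol\psi>\mathbf 0$ and $\boldsymbol\eta\in[0,1]^n$ are time-invariant, and that each $\lambda_i(t)>0$ is increasing in $t$ with $\lim_{t\to\infty}\lambda_i(t)=\infty$. Then for every initial condition $\mathbf q(0)\in\mathbb R^n$ there exist a vector $\underline{\boldsymbol\lambda}>\mathbf 0$ and a number $\underline T>0$ such that if $\lambda_i(t)<\underline\lambda_i$ for all $i$ and all $t<\underline T$, then all players favour the risk-dominant action $D$ as $t\to\infty$ (i.e., $q_i(t)>0$ for all $i$ and all sufficiently large $t$).
   Context: There are $n$ agents on an undirected simple graph with symmetric adjacency matrix $G\in\{0,1\}^{n\times n}$, $G_{ii}=0$; $N_i=\{j:G_{ij}=1\}$. Actions are $C$ and $D$. The stage payoff to an agent playing the row action against a neighbour playing the column action is $u(C,C)=z$, $u(C,D)=y$, $u(D,C)=x$, $u(D,D)=w$. The state is $\mathbf q(t)\in\mathbb R^n$ ($q_i$ = attraction of $D$ minus attraction of $C$ for agent $i$), $p_i(t)=1/(1+e^{-\lambda_i(t) q_i(t)})$, and the (non-autonomous) dynamics are $$\dot q_i=-\psi_i q_i+\big(p_i+\eta_i(1-p_i)\big)\sum_{j\in N_i}\big(p_jw+(1-p_j)x\big)-\big(1-p_i+\eta_ip_i\big)\sum_{j\in N_i}\big(p_jy+(1-p_j)z\big).$$ *)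

theory Defs
  imports "HOL-Analysis.Analysis"
begin

definition logistic_p :: "real \<Rightarrow> real \<Rightarrow> real" where
  "logistic_p lam qi = 1 / (1 + exp (- lam * qi))"

definition graph_connected :: "('n \<Rightarrow> 'n \<Rightarrow> bool) \<Rightarrow> bool" where
  "graph_connected G \<longleftrightarrow> (\<forall>i j. G\<^sup>*\<^sup>* i j)"

text \<open>Right-hand side of the dynamics for agent i, given the current
  rationality levels lamv (one per agent) and the current state qv.
  Payoffs: u(C,C)=z, u(C,D)=y, u(D,C)=x, u(D,D)=w.\<close>
definition dyn_rhs ::
  "('n::finite \<Rightarrow> 'n \<Rightarrow> bool) \<Rightarrow> real \<Rightarrow> real \<Rightarrow> real \<Rightarrow> real \<Rightarrow>
   ('n \<Rightarrow> real) \<Rightarrow> ('n \<Rightarrow> real) \<Rightarrow> ('n \<Rightarrow> real) \<Rightarrow> ('n \<Rightarrow> real) \<Rightarrow> 'n \<Rightarrow> real" where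
  "dyn_rhs G x y z w psi eta lamv qv i =
     (let p = (\<lambda>j. logistic_p (lamv j) (qv j)) in
      - psi i * qv i
      + (p i + eta i * (1 - p i)) * (\<Sum>j\<in>{j. G i j}. p j * w + (1 - p j) * x)
      - (1 - p i + eta i * p i) * (\<Sum>j\<in>{j. G i j}. p j * y + (1 - p j) * z))"

end

theory Submission
  imports Defs
begin


lemma lp_rng: "0 < logistic_p l s \<and> logistic_p l s < 1"
  unfolding logistic_p_def
  by (auto simp: field_simps add_pos_pos)

lemma lp_neg: "logistic_p l (-s) = 1 - logistic_p l s"
  unfolding logistic_p_def
proof -
  have e: "exp (- l * - s) = 1 / exp (- l * s)" by (simp add: exp_minus divide_inverse)
  have "exp (- l * s) > 0" by simp
  then have "1 + exp (- l * s) \<noteq> 0" by linarith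
  then show "1 / (1 + exp (- l * - s)) = 1 - 1 / (1 + exp (- l * s))"
    unfolding e by (simp add: field_simps add_divide_distrib[symmetric])
qed

lemma half_aux: assumes "(u::real) \<ge> 0" shows "1 / (1 + exp (- u)) - 1 / 2 \<le> u / 2"
  and "1 / (1 + exp (- u)) \<ge> 1 / 2"
proof -
  define E where "E = exp (-u)"
  have e1: "E \<ge> 1 - u" using exp_ge_add_one_self[of "-u"] by (simp add: E_def)
  have e2: "E \<le> 1" using assms by (simp add: E_def)
  have p: "E > 0" by (simp add: E_def)
  have "1 / (1 + E) - 1 / 2 = (1 - E) / (2 * (1 + E))" using p by (simp add: field_simps)
  also have "\<dots> \<le> (1 - E) / 2" proof -
    have "(1 - E) * (2 * E) \<ge> 0" using p e2 by simp
    then have "2 - E * 2 \<le> (1 - E) * (2 + 2 * E)" by (simp add: algebra_simps)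
    then show ?thesis using p by (simp add: divide_simps)
  qed
  also have "\<dots> \<le> u / 2" using e1 by simp
  finally show "1 / (1 + exp (- u)) - 1 / 2 \<le> u / 2" by (simp add: E_def)
  have "1 / 2 \<le> 1 / (1 + E)" using p e2 by (simp add: divide_simps)
  then show "1 / (1 + exp (- u)) \<ge> 1 / 2" by (simp add: E_def)
qed

lemma lp_half_nonneg: assumes "l * s \<ge> 0" shows "logistic_p l s - 1 / 2 \<le> l * s / 2"
  and "logistic_p l s \<ge> 1 / 2"
  using half_aux[OF assms] unfolding logistic_p_def by simp_all

lemma lp_half: "\<bar>logistic_p l s - 1 / 2\<bar> \<le> \<bar>l * s\<bar> / 2"
proof (cases "l * s \<ge> 0")
  case True then show ?thesis using lp_half_nonneg[OF True] by simp
next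
  case False
  hence "l * (-s) \<ge> 0" by simp
  from lp_half_nonneg[OF this] show ?thesis using False by (simp add: lp_neg)
qed

lemma lp_zero: "logistic_p l 0 = 1 / 2" unfolding logistic_p_def by simp



definition Aof :: "('n \<Rightarrow> 'n \<Rightarrow> bool) \<Rightarrow> real \<Rightarrow> real \<Rightarrow> real \<Rightarrow> real \<Rightarrow> ('n \<Rightarrow> real) \<Rightarrow> ('n \<Rightarrow> real) \<Rightarrow> 'n \<Rightarrow> real" where
"Aof G x y z w eta p i = (\<Sum>j\<in>{j. G i j}. (p i + eta i * (1 - p i)) * (p j * w + (1 - p j) * x)
    - (1 - p i + eta i * p i) * (p j * y + (1 - p j) * z))"

lemma dyn_eq: "dyn_rhs G x y z w psi eta lamv qv i = - psi i * qv i + Aof G x y z w eta (\<lambda>j. logistic_p (lamv j) (qv j)) i"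
  by (simp add: dyn_rhs_def Aof_def Let_def sum_distrib_left sum_subtractf)

lemma term_abs:
  fixes pi pj e x y z w :: real
  assumes "0 \<le> pi" "pi \<le> 1" "0 \<le> pj" "pj \<le> 1" "0 \<le> e" "e \<le> 1"
  shows "\<bar>(pi + e * (1 - pi)) * (pj * w + (1 - pj) * x) - (1 - pi + e * pi) * (pj * y + (1 - pj) * z)\<bar>
     \<le> \<bar>w\<bar> + \<bar>x\<bar> + \<bar>y\<bar> + \<bar>z\<bar>"
proof -
  have a1: "0 \<le> pi + e * (1 - pi)" "pi + e * (1 - pi) \<le> 1"
    using assms by (auto intro: mult_nonneg_nonneg) (smt (verit) mult_left_le_one_le mult_nonneg_nonneg)
  have b1: "0 \<le> 1 - pi + e * pi" "1 - pi + e * pi \<le> 1"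
    using assms by (auto intro: mult_nonneg_nonneg) (smt (verit) mult_left_le_one_le mult_nonneg_nonneg)
  have h: "\<bar>pj * w + (1 - pj) * x\<bar> \<le> \<bar>w\<bar> + \<bar>x\<bar>"
  proof -
    have "\<bar>pj * w\<bar> \<le> \<bar>w\<bar>" using assms by (simp add: abs_mult mult_left_le_one_le)
    moreover have "\<bar>(1 - pj) * x\<bar> \<le> \<bar>x\<bar>" using assms by (simp add: abs_mult mult_left_le_one_le)
    ultimately show ?thesis by linarith
  qed
  have k: "\<bar>pj * y + (1 - pj) * z\<bar> \<le> \<bar>y\<bar> + \<bar>z\<bar>"
  proof -
    have "\<bar>pj * y\<bar> \<le> \<bar>y\<bar>" using assms by (simp add: abs_mult mult_left_le_one_le)
    moreover have "\<bar>(1 - pj) * z\<bar> \<le> \<bar>z\<bar>" using assms by (simp add: abs_mult mult_left_le_one_le)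
    ultimately show ?thesis by linarith
  qed
  have "\<bar>(pi + e * (1 - pi)) * (pj * w + (1 - pj) * x)\<bar> \<le> \<bar>w\<bar> + \<bar>x\<bar>"
    using a1 h by (simp add: abs_mult) (smt (verit) mult_left_le_one_le abs_ge_zero)
  moreover have "\<bar>(1 - pi + e * pi) * (pj * y + (1 - pj) * z)\<bar> \<le> \<bar>y\<bar> + \<bar>z\<bar>"
    using b1 k by (simp add: abs_mult) (smt (verit) mult_left_le_one_le abs_ge_zero)
  ultimately show ?thesis by linarith
qed



lemma lin_aux: "(E::real) \<ge> - P \<Longrightarrow> P \<le> d / 4 \<Longrightarrow> a = d / 2 + E \<Longrightarrow> a \<ge> d / 4"
  by linarith

lemma conv_abs: "0 \<le> (p::real) \<Longrightarrow> p \<le> 1 \<Longrightarrow> \<bar>p * a + (1 - p) * b\<bar> \<le> \<bar>a\<bar> + \<bar>b\<bar>"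
proof -
  assume h: "0 \<le> p" "p \<le> 1"
  have "\<bar>p * a\<bar> \<le> \<bar>a\<bar>" using h by (simp add: abs_mult mult_left_le_one_le)
  moreover have "\<bar>(1 - p) * b\<bar> \<le> \<bar>b\<bar>" using h by (simp add: abs_mult mult_left_le_one_le)
  ultimately show ?thesis by linarith
qed

lemma term_lower:
  fixes pi pj e x y z w dl :: real
  assumes "\<bar>pi - 1 / 2\<bar> \<le> dl" "\<bar>pj - 1 / 2\<bar> \<le> dl" "0 \<le> e" "e \<le> 1"
    and "0 \<le> pj" "pj \<le> 1"
    and "dl * ((w - x) + (z - y)) \<le> (w + x - y - z) / 4"
    and "dl * (\<bar>w\<bar> + \<bar>x\<bar> + \<bar>y\<bar> + \<bar>z\<bar>) \<le> (w + x - y - z) / 16"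
    and "w > x" "z > y" "w + x > z + y"
  shows "(pi + e * (1 - pi)) * (pj * w + (1 - pj) * x) - (1 - pi + e * pi) * (pj * y + (1 - pj) * z)
     \<ge> (w + x - y - z) / 16"
proof -
  define ei where "ei = pi - 1 / 2"
  define ej where "ej = pj - 1 / 2"
  define h where "h = pj * w + (1 - pj) * x"
  define k where "k = pj * y + (1 - pj) * z"
  define d where "d = w + x - y - z"
  have id: "(pi + e * (1 - pi)) * h - (1 - pi + e * pi) * k = (1 + e) / 2 * (h - k) + ei * (1 - e) * (h + k)"
    unfolding ei_def by (simp add: field_simps)
  have hk: "h - k = d / 2 + ej * ((w - x) + (z - y))"
    by (simp add: h_def k_def d_def ej_def field_simps)
  have "ej * ((w - x) + (z - y)) \<ge> - (dl * ((w - x) + (z - y)))"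
  proof -
    have "-dl \<le> ej" using assms(2) ej_def by linarith
    then have "(- dl) * ((w - x) + (z - y)) \<le> ej * ((w - x) + (z - y))"
      using assms(9,10) by (intro mult_right_mono) auto
    then show ?thesis by simp
  qed
  moreover have "dl * ((w - x) + (z - y)) \<le> d / 4" using assms(7) d_def by simp
  ultimately have hk2: "h - k \<ge> d / 4" using hk lin_aux by blast
  define H where "H = h - k"
  define T1 where "T1 = (1 + e) / 2 * H"
  have "T1 \<ge> 1 / 2 * H"
    unfolding T1_def using hk2 H_def assms(3,9,10,11) d_def by (intro mult_right_mono) auto
  hence A: "T1 \<ge> d / 8" using hk2 H_def by linarith
  have hs: "\<bar>h + k\<bar> \<le> \<bar>w\<bar> + \<bar>x\<bar> + \<bar>y\<bar> + \<bar>z\<bar>"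
  proof -
    have "\<bar>h\<bar> \<le> \<bar>w\<bar> + \<bar>x\<bar>" unfolding h_def using assms(5,6) by (rule conv_abs)
    moreover have "\<bar>k\<bar> \<le> \<bar>y\<bar> + \<bar>z\<bar>" unfolding k_def using assms(5,6) by (rule conv_abs)
    ultimately show ?thesis by linarith
  qed
  have "\<bar>ei * (1 - e) * (h + k)\<bar> \<le> dl * 1 * (\<bar>w\<bar> + \<bar>x\<bar> + \<bar>y\<bar> + \<bar>z\<bar>)"
    unfolding abs_mult using assms(1,3,4) hs ei_def
    by (intro mult_mono) auto
  hence B0: "ei * (1 - e) * (h + k) \<ge> - (dl * (\<bar>w\<bar> + \<bar>x\<bar> + \<bar>y\<bar> + \<bar>z\<bar>))" using abs_le_D2 by fastforce
  define T2 where "T2 = ei * (1 - e) * (h + k)"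
  define C where "C = dl * (\<bar>w\<bar> + \<bar>x\<bar> + \<bar>y\<bar> + \<bar>z\<bar>)"
  have B: "T2 \<ge> - C" using B0 unfolding T2_def C_def .
  have C: "C \<le> d / 16" using assms(8) d_def C_def by simp
  have "(pi + e * (1 - pi)) * h - (1 - pi + e * pi) * k = T1 + T2" using id T1_def T2_def H_def by simp
  moreover have "T1 + T2 \<ge> d / 16" using A B C by linarith
  ultimately have "(pi + e * (1 - pi)) * h - (1 - pi + e * pi) * k \<ge> d / 16" by simp
  thus ?thesis by (simp only: h_def k_def d_def)
qed

lemma term_pos:
  fixes pj e x y z w :: real
  assumes "0 \<le> e" "1 / 2 \<le> pj"
    and "w > x" "z > y" "w + x > z + y"
  shows "(1 / 2 + e * (1 - 1 / 2)) * (pj * w + (1 - pj) * x) - (1 - 1 / 2 + e * (1 / 2)) * (pj * y + (1 - pj) * z) > 0"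
proof -
  have id: "(1 / 2 + e * (1 - 1 / 2)) * (pj * w + (1 - pj) * x) - (1 - 1 / 2 + e * (1 / 2)) * (pj * y + (1 - pj) * z)
     = (1 + e) / 2 * ((w + x - y - z) / 2 + (pj - 1 / 2) * ((w - x) + (z - y)))"
    by (simp add: field_simps)
  have "(pj - 1 / 2) * ((w - x) + (z - y)) \<ge> 0" using assms by simp
  moreover have "(w + x - y - z) / 2 > 0" using assms by simp
  ultimately have "(w + x - y - z) / 2 + (pj - 1 / 2) * ((w - x) + (z - y)) > 0" by (rule add_pos_nonneg[rotated])
  moreover have "(1 + e) / 2 > 0" using assms by simp
  ultimately show ?thesis unfolding id by simp
qed



lemma Aof_abs:
  fixes G :: "'n::finite \<Rightarrow> 'n \<Rightarrow> bool"
  assumes "\<forall>j. 0 \<le> p j \<and> p j \<le> 1" "0 \<le> eta i" "eta i \<le> 1"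
  shows "\<bar>Aof G x y z w eta p i\<bar> \<le> real CARD('n) * (\<bar>w\<bar> + \<bar>x\<bar> + \<bar>y\<bar> + \<bar>z\<bar>)"
proof -
  have "\<bar>Aof G x y z w eta p i\<bar> \<le> (\<Sum>j\<in>{j. G i j}. \<bar>w\<bar> + \<bar>x\<bar> + \<bar>y\<bar> + \<bar>z\<bar>)"
    unfolding Aof_def using assms
    by (intro order_trans[OF sum_abs] sum_mono term_abs) auto
  also have "\<dots> = real (card {j. G i j}) * (\<bar>w\<bar> + \<bar>x\<bar> + \<bar>y\<bar> + \<bar>z\<bar>)" by simp
  also have "\<dots> \<le> real CARD('n) * (\<bar>w\<bar> + \<bar>x\<bar> + \<bar>y\<bar> + \<bar>z\<bar>)"
    by (intro mult_right_mono) (auto simp: card_mono)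
  finally show ?thesis .
qed

lemma Aof_lower:
  fixes G :: "'n::finite \<Rightarrow> 'n \<Rightarrow> bool"
  assumes "G i j0" "\<forall>j. 0 \<le> p j \<and> p j \<le> 1 \<and> \<bar>p j - 1 / 2\<bar> \<le> dl" "0 \<le> eta i" "eta i \<le> 1"
    and "dl * ((w - x) + (z - y)) \<le> (w + x - y - z) / 4"
    and "dl * (\<bar>w\<bar> + \<bar>x\<bar> + \<bar>y\<bar> + \<bar>z\<bar>) \<le> (w + x - y - z) / 16"
    and "w > x" "z > y" "w + x > z + y"
  shows "Aof G x y z w eta p i \<ge> (w + x - y - z) / 16"
proof -
  let ?f = "\<lambda>j. (p i + eta i * (1 - p i)) * (p j * w + (1 - p j) * x)
    - (1 - p i + eta i * p i) * (p j * y + (1 - p j) * z)"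
  have t: "\<And>j. ?f j \<ge> (w + x - y - z) / 16"
    using assms by (intro term_lower) auto
  have "(w + x - y - z) / 16 \<le> ?f j0" by (rule t)
  also have "?f j0 \<le> (\<Sum>j\<in>{j. G i j}. ?f j)"
  proof (rule member_le_sum)
    show "j0 \<in> {j. G i j}" using assms by simp
    fix j show "0 \<le> ?f j" by (rule order_trans[OF _ t[of j]]) (use assms in simp)
  qed simp
  finally show ?thesis unfolding Aof_def .
qed

lemma Aof_pos:
  fixes G :: "'n::finite \<Rightarrow> 'n \<Rightarrow> bool"
  assumes "G i j0" "\<forall>j. 1 / 2 \<le> p j" "p i = 1 / 2" "0 \<le> eta i"
    and "w > x" "z > y" "w + x > z + y"
  shows "Aof G x y z w eta p i > 0"
proof -
  let ?f = "\<lambda>j. (p i + eta i * (1 - p i)) * (p j * w + (1 - p j) * x)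
    - (1 - p i + eta i * p i) * (p j * y + (1 - p j) * z)"
  have t: "\<And>j. ?f j > 0"
    unfolding assms(3) using assms by (intro term_pos) auto
  have "0 < ?f j0" by (rule t)
  also have "?f j0 \<le> (\<Sum>j\<in>{j. G i j}. ?f j)"
  proof (rule member_le_sum)
    show "j0 \<in> {j. G i j}" using assms by simp
    fix j show "0 \<le> ?f j" using t[of j] by (rule less_imp_le)
  qed simp
  finally show ?thesis unfolding Aof_def .
qed



lemma cmp:
  fixes f g :: "real \<Rightarrow> real"
  assumes ps: "ps > 0" and b: "b \<ge> 0"
   and d: "\<forall>t\<in>{0..b}. (f has_real_derivative (- ps * f t + g t)) (at t within {0..})"
   and gc: "\<forall>t\<in>{0..b}. g t \<ge> c"
  shows "exp (ps * b) * f b - c * exp (ps * b) / ps \<ge> f 0 - c / ps"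
proof -
  define H where "H = (\<lambda>t. exp (ps * t) * f t - c * exp (ps * t) / ps)"
  have dH: "(H has_real_derivative exp (ps * t) * (g t - c)) (at t within {0..b})" if t: "t \<in> {0..b}" for t
  proof -
    have df: "(f has_real_derivative (- ps * f t + g t)) (at t within {0..b})"
    proof -
      have "(f has_real_derivative (- ps * f t + g t)) (at t within {0..})" using d t by blast
      then show ?thesis by (rule DERIV_subset) auto
    qed
    have de: "((\<lambda>t. exp (ps * t)) has_real_derivative exp (ps * t) * ps) (at t within {0..b})"
      by (auto intro!: derivative_eq_intros)
    have "(H has_real_derivative (exp (ps * t) * (- ps * f t + g t) + exp (ps * t) * ps * f t
        - c * (exp (ps * t) * ps) / ps)) (at t within {0..b})"
      unfolding H_def
      by (intro DERIV_diff DERIV_mult' de df DERIV_cdivide DERIV_cmult)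
    moreover have "exp (ps * t) * (- ps * f t + g t) + exp (ps * t) * ps * f t
        - c * (exp (ps * t) * ps) / ps = exp (ps * t) * (g t - c)"
    proof -
      have "c * (exp (ps * t) * ps) / ps = c * exp (ps * t)" using ps by simp
      then show ?thesis by (simp add: algebra_simps)
    qed
    ultimately show ?thesis by (simp only:)
  qed
  have "H 0 \<le> H b"
  proof (rule DERIV_nonneg_imp_increasing_open[OF b])
    fix t assume "0 < t" "t < b"
    have e: "at t within {0..b} = at t" by (rule at_within_Icc_at) fact+
    have "(H has_real_derivative exp (ps * t) * (g t - c)) (at t)"
      using dH[of t] \<open>0 < t\<close> \<open>t < b\<close> unfolding e by simp
    moreover have "exp (ps * t) * (g t - c) \<ge> 0" proof -
      have "g t \<ge> c" using gc \<open>0 < t\<close> \<open>t < b\<close> by auto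
      then show ?thesis by simp
    qed
    ultimately show "\<exists>y. (H has_real_derivative y) (at t) \<and> y \<ge> 0" by blast
  next
    show "continuous_on {0..b} H"
      using dH DERIV_continuous continuous_on_eq_continuous_within by blast
  qed
  then show ?thesis unfolding H_def by simp
qed



lemma bound_alg:
  fixes E v v0 M ps :: real
  assumes "E \<ge> 1" "ps > 0" "M \<ge> 0" "v0 - (- M) / ps \<le> E * v - (- M) * E / ps"
  shows "v \<ge> - (\<bar>v0\<bar> + M / ps)"
proof (rule ccontr)
  assume "\<not> ?thesis"
  hence v: "v < - (\<bar>v0\<bar> + M / ps)" by simp
  have E0: "E > 0" using assms by simp
  have "E * v < E * (- (\<bar>v0\<bar> + M / ps))" using mult_strict_left_mono[OF v E0] .
  also have "\<dots> = - (E * \<bar>v0\<bar>) - M * E / ps" by (simp add: algebra_simps)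
  also have "\<dots> \<le> - \<bar>v0\<bar> - M * E / ps"
  proof -
    have "1 * \<bar>v0\<bar> \<le> E * \<bar>v0\<bar>" using assms by (intro mult_right_mono) auto
    thus ?thesis by simp
  qed
  finally have "E * v < - \<bar>v0\<bar> - M * E / ps" .
  moreover have "M / ps \<ge> 0" using assms by simp
  moreover have "v0 \<ge> - \<bar>v0\<bar>" by simp
  moreover have "v0 + M / ps \<le> E * v + M * E / ps" using assms(4) by simp
  ultimately show False by linarith
qed

lemma pos_alg:
  fixes E v v0 a ps t1 :: real
  assumes "E \<ge> 1 + ps * t1" "ps > 0" "a > 0" "a * t1 > \<bar>v0\<bar>" "v0 - a / ps \<le> E * v - a * E / ps"
  shows "v > 0"
proof -
  have "a * t1 > 0" using assms(4) abs_ge_zero[of v0] by linarith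
  hence "t1 > 0" using assms(3) by (simp add: zero_less_mult_iff)
  hence "ps * t1 > 0" using assms(2) by simp
  hence E0: "E > 0" using assms(1) by linarith
  have "a * E / ps - a / ps = a * (E - 1) / ps" by (simp add: algebra_simps diff_divide_distrib)
  also have "\<dots> \<ge> a * (ps * t1) / ps"
    using assms by (intro divide_right_mono mult_left_mono) auto
  also have "a * (ps * t1) / ps = a * t1" using assms by simp
  finally have "a * E / ps - a / ps \<ge> a * t1" .
  hence "E * v > 0" using assms(4,5) by linarith
  thus ?thesis using E0 by (simp add: zero_less_mult_iff)
qed

lemma has_nb:
  fixes G :: "'n::finite \<Rightarrow> 'n \<Rightarrow> bool"
  assumes "CARD('n) \<ge> 2" "graph_connected G"
  shows "\<exists>j. G i j"
proof -
  obtain j where j: "j \<noteq> i"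
  proof (rule ccontr)
    assume "\<not> thesis"
    with that have "\<forall>j. j = i" by blast
    hence "(UNIV :: 'n set) = {i}" by auto
    hence "card (UNIV :: 'n set) = card {i}" by (rule arg_cong)
    hence "CARD('n) = 1" by simp
    with assms show False by simp
  qed
  have "G\<^sup>*\<^sup>* i j" using assms(2) unfolding graph_connected_def by blast
  then show ?thesis
    by (cases rule: converse_rtranclpE) (use j in auto)
qed



theorem corollary4:
  fixes G :: "'n::finite \<Rightarrow> 'n \<Rightarrow> bool"
    and x y z w :: real
    and psi eta :: "'n \<Rightarrow> real"
    and q0 :: "'n \<Rightarrow> real"
  assumes n2: "CARD('n) \<ge> 2"
    and irrefl: "\<forall>i. \<not> G i i"
    and sym: "\<forall>i j. G i j = G j i"
    and conn: "graph_connected G"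
    and "z > w" and "w > x" and "x > y" and "w + x > z + y"
    and "w > 0" and "z > 0"
    and psi_pos: "\<forall>i. psi i > 0"
    and eta_rng: "\<forall>i. 0 \<le> eta i \<and> eta i \<le> 1"
  shows "\<exists>lb T. (\<forall>i. lb i > 0) \<and> T > 0 \<and>
    (\<forall>(lam :: 'n \<Rightarrow> real \<Rightarrow> real) (q :: real \<Rightarrow> 'n \<Rightarrow> real).
       (\<forall>i t. t \<ge> 0 \<longrightarrow> lam i t > 0)
     \<and> (\<forall>i. mono_on {0..} (lam i))
     \<and> (\<forall>i. filterlim (lam i) at_top at_top)
     \<and> (\<forall>i t. 0 \<le> t \<and> t < T \<longrightarrow> lam i t < lb i)
     \<and> q 0 = q0
     \<and> (\<forall>i t. t \<ge> 0 \<longrightarrow>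
          ((\<lambda>s. q s i) has_real_derivative
             dyn_rhs G x y z w psi eta (\<lambda>j. lam j t) (q t) i) (at t within {0..}))
     \<longrightarrow> (\<forall>\<^sub>F t in at_top. \<forall>i. q t i > 0))"
proof -
  note wx = \<open>w > x\<close> and zy = \<open>z > w\<close> \<open>x > y\<close> and dpos = \<open>w + x > z + y\<close>
  have zy: "z > y" using \<open>z > w\<close> \<open>w > x\<close> \<open>x > y\<close> by linarith
  define d where "d = w + x - y - z"
  define K where "K = (w - x) + (z - y)"
  define C where "C = \<bar>w\<bar> + \<bar>x\<bar> + \<bar>y\<bar> + \<bar>z\<bar>"
  define dl where "dl = d / (16 * (K + C))"
  define a where "a = d / 16"
  define M where "M = real CARD('n) * C"
  define R where "R = (\<lambda>i. \<bar>q0 i\<bar> + M / psi i)"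
  define lb where "lb = (\<lambda>i. 2 * dl / (R i + 1))"
  define Q where "Q = (\<Sum>i\<in>UNIV. \<bar>q0 i\<bar>)"
  define t1 where "t1 = Q / a + 1"
  define T where "T = t1 + 1"
  have d0: "d > 0" using dpos d_def by simp
  have K0: "K > 0" using wx zy K_def by simp
  have C0: "C > 0" using \<open>w > 0\<close> C_def by simp
  have dl0: "dl > 0" using d0 K0 C0 dl_def by simp
  have a0: "a > 0" using d0 a_def by simp
  have M0: "M \<ge> 0" using C0 M_def by simp
  have R0: "R i \<ge> 0" for i
  proof -
    have "M / psi i \<ge> 0" using M0 psi_pos[rule_format, of i] by simp
    then show ?thesis unfolding R_def using abs_ge_zero[of "q0 i"] by linarith
  qed
  have lb0: "\<And>i. lb i > 0" using R0 dl0 lb_def by (simp add: add_nonneg_pos)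
  have Q0: "Q \<ge> 0" using Q_def by (simp add: sum_nonneg)
  have t10: "t1 > 0"
  proof -
    have "Q / a \<ge> 0" using Q0 a0 by simp
    then show ?thesis unfolding t1_def by linarith
  qed
  have dlK: "dl * ((w - x) + (z - y)) \<le> (w + x - y - z) / 4"
  proof -
    have "dl * K = d * (K / (16 * (K + C)))" by (simp add: dl_def)
    also have "\<dots> \<le> d * (1 / 16)"
      using d0 K0 C0 by (intro mult_left_mono) (auto simp: divide_simps)
    finally show ?thesis using d0 K_def d_def by simp
  qed
  have dlC: "dl * (\<bar>w\<bar> + \<bar>x\<bar> + \<bar>y\<bar> + \<bar>z\<bar>) \<le> (w + x - y - z) / 16"
  proof -
    have "dl * C = d * (C / (16 * (K + C)))" by (simp add: dl_def)
    also have "\<dots> \<le> d * (1 / 16)"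
      using d0 K0 C0 by (intro mult_left_mono) (auto simp: divide_simps)
    finally show ?thesis using d0 C_def d_def by simp
  qed
  have nb: "\<And>i. \<exists>j. G i j" using has_nb[OF n2 conn] by blast
  show ?thesis
  proof (intro exI conjI allI impI)
    show "\<And>i. lb i > 0" by (rule lb0)
    show "T > 0" using t10 T_def by simp
    fix lam :: "'n \<Rightarrow> real \<Rightarrow> real" and q :: "real \<Rightarrow> 'n \<Rightarrow> real"
    assume H: "(\<forall>i t. t \<ge> 0 \<longrightarrow> lam i t > 0)
     \<and> (\<forall>i. mono_on {0..} (lam i))
     \<and> (\<forall>i. filterlim (lam i) at_top at_top)
     \<and> (\<forall>i t. 0 \<le> t \<and> t < T \<longrightarrow> lam i t < lb i)
     \<and> q 0 = q0
     \<and> (\<forall>i t. t \<ge> 0 \<longrightarrow>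
          ((\<lambda>s. q s i) has_real_derivative
             dyn_rhs G x y z w psi eta (\<lambda>j. lam j t) (q t) i) (at t within {0..}))"
    have lampos: "\<And>i t. t \<ge> 0 \<Longrightarrow> lam i t > 0" using H by blast
    have lamlb: "\<And>i t. 0 \<le> t \<Longrightarrow> t < T \<Longrightarrow> lam i t < lb i" using H by blast
    have qinit: "q 0 = q0" using H by blast
    define P where "P = (\<lambda>t j. logistic_p (lam j t) (q t j))"
    define A where "A = (\<lambda>i t. Aof G x y z w eta (P t) i)"
    have der: "\<And>i t. t \<ge> 0 \<Longrightarrow> ((\<lambda>s. q s i) has_real_derivative - psi i * q t i + A i t) (at t within {0..})"
      using H unfolding A_def P_def dyn_eq by blast
    have P01: "\<And>t j. 0 \<le> P t j \<and> P t j \<le> 1" unfolding P_def using lp_rng less_imp_le by blast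
    have Aabs: "\<And>i t. \<bar>A i t\<bar> \<le> M"
      unfolding A_def M_def C_def using P01 eta_rng by (intro Aof_abs) auto
    have Alo: "- M \<le> A i t" for i t using abs_le_D2[OF Aabs[of i t]] by linarith
    have Ahi: "A i t \<le> M" for i t using abs_le_D1[OF Aabs[of i t]] by linarith
    have qb: "\<bar>q t i\<bar> \<le> R i" if t: "t \<ge> 0" for t i
    proof -
      have E1: "exp (psi i * t) \<ge> 1" using psi_pos[rule_format, of i] t by simp
      have lo: "q 0 i - (- M) / psi i \<le> exp (psi i * t) * q t i - (- M) * exp (psi i * t) / psi i"
        using psi_pos[rule_format, of i] t der Alo by (intro cmp[where g = "A i"]) auto
      have l: "q t i \<ge> - R i" using bound_alg[OF E1 psi_pos[rule_format] M0 lo] qinit R_def by simp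
      have hi: "- q 0 i - (- M) / psi i \<le> exp (psi i * t) * (- q t i) - (- M) * exp (psi i * t) / psi i"
      proof (rule cmp[where f = "\<lambda>s. - q s i" and g = "\<lambda>s. - A i s"])
        show "0 < psi i" using psi_pos by simp
        show "0 \<le> t" by fact
        show "\<forall>s\<in>{0..t}. ((\<lambda>s. - q s i) has_real_derivative - psi i * - q s i + - A i s) (at s within {0..})"
        proof
          fix s assume "s \<in> {0..t}"
          then have "((\<lambda>s. q s i) has_real_derivative - psi i * q s i + A i s) (at s within {0..})"
            using der by simp
          then have "((\<lambda>s. - q s i) has_real_derivative - (- psi i * q s i + A i s)) (at s within {0..})"
            by (rule DERIV_minus)
          then show "((\<lambda>s. - q s i) has_real_derivative - psi i * - q s i + - A i s) (at s within {0..})"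
            by simp
        qed
        show "\<forall>s\<in>{0..t}. - M \<le> - A i s" using Ahi by (auto simp: le_minus_iff)
      qed
      have h: "- q t i \<ge> - R i" using bound_alg[OF E1 psi_pos[rule_format] M0 hi] qinit R_def by simp
      show ?thesis using l h by simp
    qed
    have pt1: "q t1 i > 0" for i
    proof -
      have Alow: "A i s \<ge> a" if s: "s \<in> {0..t1}" for s
      proof -
        have "\<bar>P s j - 1 / 2\<bar> \<le> dl" for j
        proof -
          have "\<bar>P s j - 1 / 2\<bar> \<le> \<bar>lam j s * q s j\<bar> / 2" unfolding P_def by (rule lp_half)
          also have "\<bar>lam j s * q s j\<bar> = lam j s * \<bar>q s j\<bar>"
            using lampos[of s j] s by (simp add: abs_mult)
          also have "lam j s * \<bar>q s j\<bar> \<le> lb j * R j"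
            using lamlb[of s j] lampos[of s j] qb[of s j] s T_def
            by (intro mult_mono) auto
          also have "lb j * R j = 2 * dl * (R j / (R j + 1))" by (simp add: lb_def)
          also have "\<dots> \<le> 2 * dl * 1"
            using dl0 R0[of j] by (intro mult_left_mono) auto
          finally show ?thesis by simp
        qed
        moreover obtain j0 where "G i j0" using nb by blast
        ultimately show ?thesis unfolding A_def a_def d_def
          using P01 eta_rng dlK dlC wx zy dpos by (intro Aof_lower) auto
      qed
      have E1: "exp (psi i * t1) \<ge> 1 + psi i * t1" by (rule exp_ge_add_one_self)
      have c: "q 0 i - a / psi i \<le> exp (psi i * t1) * q t1 i - a * exp (psi i * t1) / psi i"
        using psi_pos t10 der Alow by (intro cmp[where g = "A i"]) auto
      have "\<bar>q0 i\<bar> \<le> Q" unfolding Q_def by (rule member_le_sum) auto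
      hence at1: "a * t1 > \<bar>q0 i\<bar>" using a0 unfolding t1_def by (simp add: algebra_simps)
      show ?thesis using pos_alg[OF E1 psi_pos[rule_format] a0 at1] c qinit by simp
    qed
    have cont: "continuous_on {0..} (\<lambda>s. q s i)" for i
      unfolding continuous_on_eq_continuous_within
    proof
      fix t :: real assume "t \<in> {0..}"
      then have "t \<ge> 0" by simp
      then show "continuous (at t within {0..}) (\<lambda>s. q s i)" by (rule DERIV_continuous[OF der])
    qed
    have inv: "\<forall>t\<ge>t1. \<forall>i. q t i > 0"
    proof (rule ccontr)
      assume nt: "\<not> (\<forall>t\<ge>t1. \<forall>i. q t i > 0)"
      define S where "S = {s. t1 \<le> s \<and> (\<exists>i. q s i \<le> 0)}"
      have Sne: "S \<noteq> {}" using nt S_def by (auto simp: not_less)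
      have Seq: "S = (\<Union>i. {t1..} \<inter> (\<lambda>s. q s i) -` {..0})" unfolding S_def by auto
      have cl: "closed ({t1..} \<inter> (\<lambda>s. q s i) -` {..0})" for i
      proof (rule continuous_closed_preimage)
        show "continuous_on {t1..} (\<lambda>s. q s i)"
          by (rule continuous_on_subset[OF cont]) (use t10 in auto)
      qed auto
      have "closed (\<Union>i. {t1..} \<inter> (\<lambda>s. q s i) -` {..0})"
        by (rule closed_UN) (use cl in auto)
      then have Scl: "closed S" unfolding Seq .
      have Sbdd: "bdd_below S" unfolding S_def by (rule bdd_belowI[where m = t1]) auto
      define s0 where "s0 = Inf S"
      have s0S: "s0 \<in> S" unfolding s0_def by (rule closed_contains_Inf[OF Sne Sbdd Scl])
      have minS: "s0 \<le> s" if "s \<in> S" for s unfolding s0_def using that Sbdd by (rule cInf_lower)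
      have s0t1: "s0 \<ge> t1" using s0S S_def by auto
      have s0ne: "s0 \<noteq> t1"
      proof
        assume "s0 = t1"
        then obtain i where "q t1 i \<le> 0" using s0S S_def by auto
        with pt1[of i] show False by simp
      qed
      hence s0gt: "s0 > t1" using s0t1 by simp
      have before: "\<And>s j. t1 \<le> s \<Longrightarrow> s < s0 \<Longrightarrow> q s j > 0"
      proof (rule ccontr)
        fix s j assume "t1 \<le> s" "s < s0" "\<not> q s j > 0"
        hence "q s j \<le> 0" "t1 \<le> s" by simp_all
        hence "s \<in> S" unfolding S_def by blast
        with minS \<open>s < s0\<close> show False by force
      qed
      obtain i0 where i0: "q s0 i0 \<le> 0" using s0S S_def by auto
      have nonneg: "q s0 j \<ge> 0" for j
      proof (rule ccontr)
        assume "\<not> q s0 j \<ge> 0"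
        hence neg: "q s0 j \<le> 0" by simp
        have "continuous_on {t1..s0} (\<lambda>s. q s j)"
          by (rule continuous_on_subset[OF cont]) (use t10 in auto)
        then obtain r where r: "t1 \<le> r" "r \<le> s0" "q r j = 0"
          using IVT2'[of "\<lambda>s. q s j" s0 0 t1] neg pt1[of j] s0t1 by auto
        have "r \<noteq> s0" using r \<open>\<not> q s0 j \<ge> 0\<close> by auto
        hence "r < s0" using r by simp
        with before[OF r(1) this, of j] r show False by simp
      qed
      have qi0: "q s0 i0 = 0" using i0 nonneg[of i0] by simp
      have s0pos: "s0 > 0" using s0gt t10 by simp
      have derat: "((\<lambda>s. q s i0) has_real_derivative - psi i0 * q s0 i0 + A i0 s0) (at s0)"
      proof -
        have "((\<lambda>s. q s i0) has_real_derivative - psi i0 * q s0 i0 + A i0 s0) (at s0 within {0..s0+1})"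
          by (rule DERIV_subset[OF der[of s0 i0]]) (use s0pos in auto)
        moreover have "at s0 within {0..s0+1} = at s0" using s0pos by (intro at_within_Icc_at) auto
        ultimately show ?thesis by simp
      qed
      have Apos: "A i0 s0 > 0"
      proof -
        obtain j0 where "G i0 j0" using nb by blast
        moreover have "\<forall>j. 1 / 2 \<le> P s0 j"
        proof
          fix j
          have "lam j s0 * q s0 j \<ge> 0" using lampos[of s0 j] s0pos nonneg[of j] by simp
          then show "1 / 2 \<le> P s0 j" unfolding P_def by (rule lp_half_nonneg(2))
        qed
        moreover have "P s0 i0 = 1 / 2" unfolding P_def qi0 by (rule lp_zero)
        ultimately show ?thesis unfolding A_def
          using eta_rng wx zy dpos by (intro Aof_pos) auto
      qed
      have "- psi i0 * q s0 i0 + A i0 s0 > 0" using qi0 Apos by simp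
      from DERIV_pos_inc_left[OF derat this] obtain e where e: "e > 0"
        "\<And>h. h > 0 \<Longrightarrow> h < e \<Longrightarrow> q (s0 - h) i0 < q s0 i0" by blast
      define h where "h = min e (s0 - t1) / 2"
      have h0: "h > 0" "h < e" "h \<le> s0 - t1" using e s0gt h_def by auto
      have "q (s0 - h) i0 < 0" using e(2)[OF h0(1,2)] qi0 by simp
      moreover have "q (s0 - h) i0 > 0" using before[of "s0 - h" i0] h0 by simp
      ultimately show False by simp
    qed
    show "\<forall>\<^sub>F t in at_top. \<forall>i. q t i > 0"
      unfolding eventually_at_top_linorder using inv by blast
  qed
qed


end
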